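(* Let $\alpha,\beta\in\mathbb{R}$ with $\alpha\neq 0$, and let $G_1$ be the connected, simply connected Lie group whose Lie algebra $\mathfrak{g}_1$ has a basis $\{e_1,e_2,e_3\}$ with $[e_1,e_2]=\alpha e_1-\beta e_3$, $[e_1,e_3]=-\alpha e_1-\beta e_2$, $[e_2,e_3]=\beta e_1+\alpha e_2+\alpha e_3$, equipped with the left-invariant Lorentzian metric $g$ for which $\{e_1,e_2,e_3\}$ is pseudo-orthonormal with $e_3$ timelike, and with the product structure $J$. Let $\lambda_0,c\in\mathbb{R}$. Then there exists a derivation $D$ of $\mathfrak{g}_1$ with $\widetilde{\mathrm{Ric}}^0=(s^0\lambda_0+c)\mathrm{Id}+D$ (i.e. $(G_1,g,J)$ is an algebraic Schouten soliton associated to the canonical connection $\nabla^0$) if and only if $\beta=0$ and $c=-\frac12\alpha^2+2\alpha^2\lambda_0$.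
   Context: Pseudo-orthonormal means $g(e_1,e_1)=g(e_2,e_2)=1$, $g(e_3,e_3)=-1$, $g(e_i,e_j)=0$ for $i\neq j$; left-invariant tensors are identified with their values on $\mathfrak{g}$. $\nabla$ is the Levi-Civita connection of $g$. The product structure $J$ is the left-invariant endomorphism with $Je_1=e_1$, $Je_2=e_2$, $Je_3=-e_3$. The canonical connection is $\nabla^0_XY=\nabla_XY-\frac12(\nabla_XJ)JY$, and the Kobayashi–Nomizu connection is $\nabla^1_XY=\nabla^0_XY-\frac14[(\nabla_YJ)JX-(\nabla_{JY}J)X]$. For $k=0,1$: $R^k(X,Y)Z=\nabla^k_X\nabla^k_YZ-\nabla^k_Y\nabla^k_XZ-\nabla^k_{[X,Y]}Z$; $\rho^k(X,Y)=-g(R^k(X,e_1)Y,e_1)-g(R^k(X,e_2)Y,e_2)+g(R^k(X,e_3)Y,e_3)$; $\widetilde\rho^k(X,Y)=\frac12(\rho^k(X,Y)+\rho^k(Y,X))$; $\widetilde{\mathrm{Ric}}^k$ is defined by $\widetilde\rho^k(X,Y)=g(\widetilde{\mathrm{Ric}}^k(X),Y)$; and $s^k=\widetilde\rho^k(e_1,e_1)+\widetilde\rho^k(e_2,e_2)-\widetilde\rho^k(e_3,e_3)$. A derivation of $\mathfrak{g}$ is a linear map $D$ with $D[X,Y]=[DX,Y]+[X,DY]$. $(G,g,J)$ is an algebraic Schouten soliton associated to $\nabla^k$ (with real constants $\lambda_0,c$) if $\widetilde{\mathrm{Ric}}^k=(s^k\lambda_0+c)\mathrm{Id}+D$ for some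 derivation $D$. *)

theory Defs
  imports "HOL-Analysis.Analysis"
begin

text \<open>The Lie algebra is modelled as real^3 with basis e1, e2, e3 (standard basis).\<close>

definition e1 :: "real^3" where "e1 = vector [1, 0, 0]"
definition e2 :: "real^3" where "e2 = vector [0, 1, 0]"
definition e3 :: "real^3" where "e3 = vector [0, 0, 1]"

definition gL :: "real^3 \<Rightarrow> real^3 \<Rightarrow> real" where
  "gL x y = x$1 * y$1 + x$2 * y$2 - x$3 * y$3"

text \<open>Lie bracket of g1: bilinear antisymmetric extension of the structure equations.\<close>
definition br1 :: "real \<Rightarrow> real \<Rightarrow> real^3 \<Rightarrow> real^3 \<Rightarrow> real^3" where
  "br1 \<alpha> \<beta> x y =
     (x$1 * y$2 - x$2 * y$1) *\<^sub>R (\<alpha> *\<^sub>R e1 - \<beta> *\<^sub>R e3)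
   + (x$1 * y$3 - x$3 * y$1) *\<^sub>R (- \<alpha> *\<^sub>R e1 - \<beta> *\<^sub>R e2)
   + (x$2 * y$3 - x$3 * y$2) *\<^sub>R (\<beta> *\<^sub>R e1 + \<alpha> *\<^sub>R e2 + \<alpha> *\<^sub>R e3)"

definition koszul :: "(real^3 \<Rightarrow> real^3 \<Rightarrow> real^3) \<Rightarrow> real^3 \<Rightarrow> real^3 \<Rightarrow> real^3 \<Rightarrow> real" where
  "koszul br X Y Z = (gL (br X Y) Z - gL (br Y Z) X + gL (br Z X) Y) / 2"

definition LC :: "(real^3 \<Rightarrow> real^3 \<Rightarrow> real^3) \<Rightarrow> real^3 \<Rightarrow> real^3 \<Rightarrow> real^3" where
  "LC br X Y = (THE W. \<forall>Z. gL W Z = koszul br X Y Z)"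

definition Jp :: "real^3 \<Rightarrow> real^3" where
  "Jp x = vector [x$1, x$2, - x$3]"

definition nablaJ :: "(real^3 \<Rightarrow> real^3 \<Rightarrow> real^3) \<Rightarrow> real^3 \<Rightarrow> real^3 \<Rightarrow> real^3" where
  "nablaJ br X Y = LC br X (Jp Y) - Jp (LC br X Y)"

definition nabla0 :: "(real^3 \<Rightarrow> real^3 \<Rightarrow> real^3) \<Rightarrow> real^3 \<Rightarrow> real^3 \<Rightarrow> real^3" where
  "nabla0 br X Y = LC br X Y - (1/2) *\<^sub>R nablaJ br X (Jp Y)"

definition curv0 :: "(real^3 \<Rightarrow> real^3 \<Rightarrow> real^3) \<Rightarrow> real^3 \<Rightarrow> real^3 \<Rightarrow> real^3 \<Rightarrow> real^3" where
  "curv0 br X Y Z = nabla0 br X (nabla0 br Y Z) - nabla0 br Y (nabla0 br X Z) - nabla0 br (br X Y) Z"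

definition ricci0 :: "(real^3 \<Rightarrow> real^3 \<Rightarrow> real^3) \<Rightarrow> real^3 \<Rightarrow> real^3 \<Rightarrow> real" where
  "ricci0 br X Y = - gL (curv0 br X e1 Y) e1 - gL (curv0 br X e2 Y) e2 + gL (curv0 br X e3 Y) e3"

definition symricci0 :: "(real^3 \<Rightarrow> real^3 \<Rightarrow> real^3) \<Rightarrow> real^3 \<Rightarrow> real^3 \<Rightarrow> real" where
  "symricci0 br X Y = (ricci0 br X Y + ricci0 br Y X) / 2"

definition RicOp0 :: "(real^3 \<Rightarrow> real^3 \<Rightarrow> real^3) \<Rightarrow> real^3 \<Rightarrow> real^3" where
  "RicOp0 br X = (THE W. \<forall>Y. gL W Y = symricci0 br X Y)"

definition scal0 :: "(real^3 \<Rightarrow> real^3 \<Rightarrow> real^3) \<Rightarrow> real" where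
  "scal0 br = symricci0 br e1 e1 + symricci0 br e2 e2 - symricci0 br e3 e3"

definition is_derivation :: "(real^3 \<Rightarrow> real^3 \<Rightarrow> real^3) \<Rightarrow> (real^3 \<Rightarrow> real^3) \<Rightarrow> bool" where
  "is_derivation br D \<longleftrightarrow> linear D \<and> (\<forall>X Y. D (br X Y) = br (D X) Y + br X (D Y))"

definition algebraic_schouten_soliton0 ::
  "(real^3 \<Rightarrow> real^3 \<Rightarrow> real^3) \<Rightarrow> real \<Rightarrow> real \<Rightarrow> bool" where
  "algebraic_schouten_soliton0 br lam0 c \<longleftrightarrow>
     (\<exists>D. is_derivation br D \<and> (\<forall>X. RicOp0 br X = (scal0 br * lam0 + c) *\<^sub>R X + D X))"

end

theory Submission imports Defs begin

lemma vec3_eq: "(x::real^3) = y \<longleftrightarrow> x$1=y$1 \<and> x$2=y$2 \<and> x$3=y$3"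
  by (simp add: vec_eq_iff forall_3)

lemmas E = e1_def e2_def e3_def

lemma LC_eq: "LC (br1 a b) X Y = vector [koszul (br1 a b) X Y e1, koszul (br1 a b) X Y e2, - koszul (br1 a b) X Y e3]"
  unfolding LC_def
proof (rule the_equality)
  show "\<forall>Z. gL (vector [koszul (br1 a b) X Y e1, koszul (br1 a b) X Y e2, - koszul (br1 a b) X Y e3]) Z = koszul (br1 a b) X Y Z"
    by (simp add: gL_def koszul_def br1_def E; simp add: algebra_simps)
next
  fix W assume h: "\<forall>Z. gL W Z = koszul (br1 a b) X Y Z"
  from h[rule_format, of e1] h[rule_format, of e2] h[rule_format, of e3]
  show "W = vector [koszul (br1 a b) X Y e1, koszul (br1 a b) X Y e2, - koszul (br1 a b) X Y e3]"
    by (simp add: vec3_eq gL_def E)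
qed

lemma nabla0_eq: "nabla0 (br1 a b) X Y = (a*(X$1) - b*(X$3)/2) *\<^sub>R vector[(Y$2), -(Y$1), 0]"
  apply (simp add: vec3_eq nabla0_def nablaJ_def LC_eq Jp_def koszul_def gL_def br1_def E)
  apply (intro conjI; simp add: field_simps; simp add: algebra_simps)
  done

lemma curv0_eq: "curv0 (br1 a b) X Y Z = - ((a*(br1 a b X Y)$1 - b*(br1 a b X Y)$3/2) *\<^sub>R vector[(Z$2), -(Z$1), 0])"
  by (simp add: curv0_def nabla0_eq vec3_eq algebra_simps)

lemma ricci0_eq: "ricci0 (br1 a b) X Y = (- (a^2)*(X$2) + a^2*(X$3) - b^2*(X$2)/2) * (Y$2) - (a^2*(X$1) + b^2*(X$1)/2 - a*b*(X$3)/2) * (Y$1)"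
  apply (simp add: ricci0_def curv0_eq gL_def br1_def E)
  apply (simp add: field_simps power2_eq_square)
  done

lemma sym_eq: "symricci0 (br1 a b) X Y = ((-(a^2+b^2/2)*(X$1) + (a*b/2)*(X$3))*(Y$1) + (-(a^2+b^2/2)*(X$2) + a^2*(X$3))*(Y$2)
   -(a^2+b^2/2)*(Y$1)*(X$1) + (a*b/2)*(Y$3)*(X$1) - (a^2+b^2/2)*(Y$2)*(X$2) + a^2*(Y$3)*(X$2))/2"
  by (simp add: symricci0_def ricci0_eq field_simps power2_eq_square; simp add: algebra_simps)

definition RO :: "real \<Rightarrow> real \<Rightarrow> real^3 \<Rightarrow> real^3" where "RO a b X = vector[-(a^2+b^2/2)*(X$1) + a*b/4 * (X$3), -(a^2+b^2/2)*(X$2) + a^2/2 * (X$3), - (a*b/4) * (X$1) - a^2/2 * (X$2)]"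

lemma RicOp0_eq: "RicOp0 (br1 a b) X = RO a b X"
  unfolding RicOp0_def
proof (rule the_equality)
  show "\<forall>Y. gL (RO a b X) Y = symricci0 (br1 a b) X Y"
    by (simp add: gL_def sym_eq RO_def field_simps; simp add: algebra_simps)
next
  fix W assume h: "\<forall>Y. gL W Y = symricci0 (br1 a b) X Y"
  from h[rule_format, of e1] h[rule_format, of e2] h[rule_format, of e3]
  show "W = RO a b X"
    by (simp add: vec3_eq gL_def E sym_eq RO_def field_simps)
qed

lemma scal0_eq: "scal0 (br1 a b) = -(2*a^2+b^2)"
  by (simp add: scal0_def sym_eq E field_simps)

lemma sol_iff: "algebraic_schouten_soliton0 (br1 a b) lam0 c \<longleftrightarrow>
   is_derivation (br1 a b) (\<lambda>X. RO a b X - (-(2*a^2+b^2)*lam0 + c) *\<^sub>R X)"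
  unfolding algebraic_schouten_soliton0_def RicOp0_eq scal0_eq
proof
  assume "\<exists>D. is_derivation (br1 a b) D \<and> (\<forall>X. RO a b X = (-(2*a^2+b^2)*lam0 + c) *\<^sub>R X + D X)"
  then obtain D where D: "is_derivation (br1 a b) D" "\<forall>X. RO a b X = (-(2*a^2+b^2)*lam0 + c) *\<^sub>R X + D X" by blast
  have "D = (\<lambda>X. RO a b X - (-(2*a^2+b^2)*lam0 + c) *\<^sub>R X)"
    using D(2) by (auto simp: algebra_simps)
  then show "is_derivation (br1 a b) (\<lambda>X. RO a b X - (-(2*a^2+b^2)*lam0 + c) *\<^sub>R X)" using D(1) by simp
next
  assume "is_derivation (br1 a b) (\<lambda>X. RO a b X - (-(2*a^2+b^2)*lam0 + c) *\<^sub>R X)"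
  then show "\<exists>D. is_derivation (br1 a b) D \<and> (\<forall>X. RO a b X = (-(2*a^2+b^2)*lam0 + c) *\<^sub>R X + D X)"
    by (intro exI[of _ "\<lambda>X. RO a b X - (-(2*a^2+b^2)*lam0 + c) *\<^sub>R X"]) auto
qed

theorem theorem4p2:
  fixes \<alpha> \<beta> lam0 c :: real
  assumes "\<alpha> \<noteq> 0"
  shows "algebraic_schouten_soliton0 (br1 \<alpha> \<beta>) lam0 c \<longleftrightarrow>
           (\<beta> = 0 \<and> c = - (1/2) * \<alpha>^2 + 2 * \<alpha>^2 * lam0)"
  unfolding sol_iff
proof
  define k where "k = -(2*\<alpha>^2+\<beta>^2)*lam0 + c"
  assume "is_derivation (br1 \<alpha> \<beta>) (\<lambda>X. RO \<alpha> \<beta> X - (-(2*\<alpha>^2+\<beta>^2)*lam0 + c) *\<^sub>R X)"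
  then have h: "\<And>X Y. RO \<alpha> \<beta> (br1 \<alpha> \<beta> X Y) - k *\<^sub>R br1 \<alpha> \<beta> X Y
     = br1 \<alpha> \<beta> (RO \<alpha> \<beta> X - k *\<^sub>R X) Y + br1 \<alpha> \<beta> X (RO \<alpha> \<beta> Y - k *\<^sub>R Y)"
    unfolding is_derivation_def k_def by blast
  have h12: "RO \<alpha> \<beta> (br1 \<alpha> \<beta> e1 e2) - k *\<^sub>R br1 \<alpha> \<beta> e1 e2
     = br1 \<alpha> \<beta> (RO \<alpha> \<beta> e1 - k *\<^sub>R e1) e2 + br1 \<alpha> \<beta> e1 (RO \<alpha> \<beta> e2 - k *\<^sub>R e2)"
    by (rule h)
  have c1: "\<alpha>^3/2 + k*\<alpha> = 0" and c2: "\<alpha>^2 * \<beta> = 0"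
    using arg_cong[OF h12, of "\<lambda>v. v$1"] arg_cong[OF h12, of "\<lambda>v. v$2"]
    by (simp_all add: RO_def br1_def E field_simps power2_eq_square power3_eq_cube; simp add: algebra_simps)+
  have b0: "\<beta> = 0" using c2 assms by simp
  have "\<alpha>^2/2 + k = 0" using c1 assms
    by (metis (no_types, lifting) add_divide_distrib distrib_right mult_eq_0_iff power2_eq_square power3_eq_cube times_divide_eq_left)
  then show "\<beta> = 0 \<and> c = - (1/2) * \<alpha>^2 + 2 * \<alpha>^2 * lam0"
    using b0 unfolding k_def by (simp add: algebra_simps)
next
  assume a: "\<beta> = 0 \<and> c = - (1/2) * \<alpha>^2 + 2 * \<alpha>^2 * lam0"
  show "is_derivation (br1 \<alpha> \<beta>) (\<lambda>X. RO \<alpha> \<beta> X - (-(2*\<alpha>^2+\<beta>^2)*lam0 + c) *\<^sub>R X)"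
    unfolding is_derivation_def
  proof
    show "linear (\<lambda>X. RO \<alpha> \<beta> X - (-(2*\<alpha>^2+\<beta>^2)*lam0 + c) *\<^sub>R X)"
      by (rule linearI) (simp_all add: RO_def vec3_eq algebra_simps)
    show "\<forall>X Y. RO \<alpha> \<beta> (br1 \<alpha> \<beta> X Y) - (-(2*\<alpha>^2+\<beta>^2)*lam0 + c) *\<^sub>R br1 \<alpha> \<beta> X Y =
      br1 \<alpha> \<beta> (RO \<alpha> \<beta> X - (-(2*\<alpha>^2+\<beta>^2)*lam0 + c) *\<^sub>R X) Y +
      br1 \<alpha> \<beta> X (RO \<alpha> \<beta> Y - (-(2*\<alpha>^2+\<beta>^2)*lam0 + c) *\<^sub>R Y)"
      unfolding conjunct1[OF a] conjunct2[OF a] by (simp add: RO_def br1_def E vec3_eq field_simps power2_eq_square; simp add: algebra_simps)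
  qed
qed

end
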